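(* Let $\mathcal{X}^c=(X^c,\tau^c,\Phi^c,V^c)$ be the canonical model for $EL_{int}$. Then for every $\varphi\in\mathcal{L}_{EL_{int}}$ and every $x\in X^c$: $\varphi\in x$ iff $\mathcal{X}^c,(x,\theta^* )\models\varphi$.
   Context: Fix a countable set $\mathit{Prop}$ and a finite non-empty set $\mathcal{A}$ of agents. $\mathcal{L}_{EL_{int}}$: $\varphi ::= p \mid \neg\varphi \mid \varphi\wedge\varphi \mid K_i\varphi \mid \mathrm{int}(\varphi)$. $EL_{int}$ is the axiom system with axioms: propositional tautologies; $K_i(\varphi\to\psi)\to(K_i\varphi\to K_i\psi)$; $K_i\varphi\to\varphi$; $K_i\varphi\to K_iK_i\varphi$; $\neg K_i\varphi\to K_i\neg K_i\varphi$; $\mathrm{int}(\varphi\to\psi)\to(\mathrm{int}(\varphi)\to\mathrm{int}(\psi))$; $\mathrm{int}(\varphi)\to\varphi$; $\mathrm{int}(\varphi)\to\mathrm{int}(\mathrm{int}(\varphi))$; $K_i\varphi\to\mathrm{int}(\varphi)$; rules: modus ponens, $K_i$-necessitation, $\mathrm{int}$-necessitation. Consistent and maximally consistent sets of $\mathcal{L}_{EL_{int}}$-formulas are defined as usual w.r.t. $EL_{int}$. Canonical model: $X^c$ is the set of all maximally consistent sets; for $i\in\mathcal{A}$, $x\sim_i y$ iff for all $\varphi$, $K_i\varphi\in x\Leftrightarrow K_i\varphi\in y$; $[x]_i$ is the $\sim_i$-class of $x$; $\widehat{\varphi}=\{y\in X^c\mid\varphi\in y\}$; $\tau^c$ is the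 topology on $X^c$ generated by the subbase $\{[x]_i\cap\widehat{\mathrm{int}(\varphi)}\mid x\in X^c,\varphi\in\mathcal{L}_{EL_{int}},i\in\mathcal{A}\}$; $x\in V^c(p)$ iff $p\in x$; $\theta^*:X^c\to(\mathcal{A}\to\tau^c)$ is the total function $\theta^*(x)(i)=[x]_i$, and $\Phi^c=\{\theta^*|_U\mid U\in\tau^c\}$, where $\theta^*|_U$ has domain $U$ and $\theta^*|_U(x)(i)=[x]_i\cap U$. Semantics at $(x,\theta)$ with $x\in Dom(\theta)$: $p$ iff $x\in V^c(p)$; Booleans usual; $K_i\varphi$ iff $\varphi$ holds at $(y,\theta)$ for all $y\in\theta(x)(i)$; $\mathrm{int}(\varphi)$ iff $x\in\mathrm{Int}([\![\varphi]\!]^\theta)$ (interior in $\tau^c$), where $[\![\varphi]\!]^\theta=\{y\in Dom(\theta)\mid(y,\theta)\models\varphi\}$. *)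

theory Defs
  imports "HOL-Analysis.Analysis" "HOL-Library.Countable"
begin

text \<open>'p = propositional letters (countable), 'a = agents (finite, hence non-empty as a type).\<close>

datatype ('p, 'a) fm =
    Atom 'p
  | Neg "('p, 'a) fm"
  | Conj "('p, 'a) fm" "('p, 'a) fm"
  | K 'a "('p, 'a) fm"
  | IntOp "('p, 'a) fm"

definition Disj :: "('p,'a) fm \<Rightarrow> ('p,'a) fm \<Rightarrow> ('p,'a) fm" where
  "Disj \<phi> \<psi> = Neg (Conj (Neg \<phi>) (Neg \<psi>))"

definition Imp :: "('p,'a) fm \<Rightarrow> ('p,'a) fm \<Rightarrow> ('p,'a) fm" where
  "Imp \<phi> \<psi> = Neg (Conj \<phi> (Neg \<psi>))"

definition Top :: "('p,'a) fm" where
  "Top = Neg (Conj (Atom undefined) (Neg (Atom undefined)))"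

primrec peval :: "(('p,'a) fm \<Rightarrow> bool) \<Rightarrow> ('p,'a) fm \<Rightarrow> bool" where
  "peval v (Atom p) = v (Atom p)"
| "peval v (Neg \<phi>) = (\<not> peval v \<phi>)"
| "peval v (Conj \<phi> \<psi>) = (peval v \<phi> \<and> peval v \<psi>)"
| "peval v (K i \<phi>) = v (K i \<phi>)"
| "peval v (IntOp \<phi>) = v (IntOp \<phi>)"

definition tautology :: "('p,'a) fm \<Rightarrow> bool" where
  "tautology \<phi> \<longleftrightarrow> (\<forall>v. peval v \<phi>)"

inductive derivable :: "('p,'a) fm \<Rightarrow> bool" where
  Taut: "tautology \<phi> \<Longrightarrow> derivable \<phi>"
| K_K: "derivable (Imp (K i (Imp \<phi> \<psi>)) (Imp (K i \<phi>) (K i \<psi>)))"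
| K_T: "derivable (Imp (K i \<phi>) \<phi>)"
| K_4: "derivable (Imp (K i \<phi>) (K i (K i \<phi>)))"
| K_5: "derivable (Imp (Neg (K i \<phi>)) (K i (Neg (K i \<phi>))))"
| IntOp_K: "derivable (Imp (IntOp (Imp \<phi> \<psi>)) (Imp (IntOp \<phi>) (IntOp \<psi>)))"
| Int_T: "derivable (Imp (IntOp \<phi>) \<phi>)"
| Int_4: "derivable (Imp (IntOp \<phi>) (IntOp (IntOp \<phi>)))"
| K_Int: "derivable (Imp (K i \<phi>) (IntOp \<phi>))"
| MP: "derivable (Imp \<phi> \<psi>) \<Longrightarrow> derivable \<phi> \<Longrightarrow> derivable \<psi>"
| NecK: "derivable \<phi> \<Longrightarrow> derivable (K i \<phi>)"
| NecInt: "derivable \<phi> \<Longrightarrow> derivable (IntOp \<phi>)"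

primrec conjs :: "('p,'a) fm list \<Rightarrow> ('p,'a) fm" where
  "conjs [] = Top"
| "conjs (\<phi> # L) = Conj \<phi> (conjs L)"

definition consistent :: "('p,'a) fm set \<Rightarrow> bool" where
  "consistent \<Gamma> \<longleftrightarrow> \<not> (\<exists>L. set L \<subseteq> \<Gamma> \<and> derivable (Neg (conjs L)))"

definition maximal_consistent :: "('p,'a) fm set \<Rightarrow> bool" where
  "maximal_consistent \<Gamma> \<longleftrightarrow> consistent \<Gamma> \<and> (\<forall>\<phi>. \<phi> \<notin> \<Gamma> \<longrightarrow> \<not> consistent (insert \<phi> \<Gamma>))"

text \<open>A model is given by a topology tau, a valuation V, and a partial function theta
  whose domain is Dom and whose value at x is theta x :: 'a \<Rightarrow> 'w set.
  Semantics is only meaningful for x \<in> Dom.\<close>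
primrec sat :: "'w topology \<Rightarrow> ('p \<Rightarrow> 'w set) \<Rightarrow> 'w set \<Rightarrow> ('w \<Rightarrow> 'a \<Rightarrow> 'w set)
                 \<Rightarrow> ('p,'a) fm \<Rightarrow> 'w \<Rightarrow> bool" where
  "sat \<tau> V Dom \<theta> (Atom p) x = (x \<in> V p)"
| "sat \<tau> V Dom \<theta> (Neg \<phi>) x = (\<not> sat \<tau> V Dom \<theta> \<phi> x)"
| "sat \<tau> V Dom \<theta> (Conj \<phi> \<psi>) x = (sat \<tau> V Dom \<theta> \<phi> x \<and> sat \<tau> V Dom \<theta> \<psi> x)"
| "sat \<tau> V Dom \<theta> (K i \<phi>) x = (\<forall>y \<in> \<theta> x i. sat \<tau> V Dom \<theta> \<phi> y)"
| "sat \<tau> V Dom \<theta> (IntOp \<phi>) x = (x \<in> \<tau> interior_of {y \<in> Dom. sat \<tau> V Dom \<theta> \<phi> y})"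

definition Xc :: "('p,'a) fm set set" where
  "Xc = {x. maximal_consistent x}"

definition eqclass :: "('p,'a) fm set \<Rightarrow> 'a \<Rightarrow> ('p,'a) fm set set" where
  "eqclass x i = {y \<in> Xc. \<forall>\<phi>. K i \<phi> \<in> x \<longleftrightarrow> K i \<phi> \<in> y}"

definition hat :: "('p,'a) fm \<Rightarrow> ('p,'a) fm set set" where
  "hat \<phi> = {y \<in> Xc. \<phi> \<in> y}"

definition tau_c :: "('p,'a) fm set topology" where
  "tau_c = topology_generated_by {eqclass x i \<inter> hat (IntOp \<phi>) | x i \<phi>. x \<in> Xc}"

definition Vc :: "'p \<Rightarrow> ('p,'a) fm set set" where
  "Vc p = {x \<in> Xc. Atom p \<in> x}"

definition theta_star :: "('p,'a) fm set \<Rightarrow> 'a \<Rightarrow> ('p,'a) fm set set" where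
  "theta_star x i = eqclass x i"

text \<open>theta restricted to an open U (the elements of Phi^c); theta_star itself has domain Xc.\<close>
definition theta_restr :: "('p,'a) fm set set \<Rightarrow> ('p,'a) fm set \<Rightarrow> 'a \<Rightarrow> ('p,'a) fm set set" where
  "theta_restr U x i = eqclass x i \<inter> U"

end

theory Submission
  imports Defs
begin

lemma peval_Imp[simp]: "peval v (Imp a b) = (peval v a \<longrightarrow> peval v b)"
  by (simp add: Imp_def)
lemma peval_Top[simp]: "peval v Top"
  by (simp add: Top_def)
lemma peval_conjs[simp]: "peval v (conjs L) = (\<forall>a\<in>set L. peval v a)"
  by (induct L) auto

lemmas PE = peval_Imp peval.simps peval_conjs set_append ball_Un
lemmas PE0 = peval_Imp peval.simps peval_Top conjs.simps

lemma filter_aux: assumes "peval v \<phi>" "\<forall>a\<in>set (filter (\<lambda>y. y \<noteq> \<phi>) L). peval v a" shows "\<forall>a\<in>set L. peval v a"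
proof
  fix a assume "a \<in> set L"
  show "peval v a"
  proof (cases "a = \<phi>")
    case True then show ?thesis using assms(1) by simp
  next
    case False then have "a \<in> set (filter (\<lambda>y. y \<noteq> \<phi>) L)" using \<open>a \<in> set L\<close> by simp
    then show ?thesis using assms(2) by blast
  qed
qed

lemma taut_mp0: "tautology b \<Longrightarrow> derivable b"
  by (rule derivable.Taut)
lemma taut_mp1: "tautology (Imp a b) \<Longrightarrow> derivable a \<Longrightarrow> derivable b"
  by (rule derivable.MP, rule derivable.Taut)
lemma taut_mp2: "tautology (Imp a1 (Imp a2 b)) \<Longrightarrow> derivable a1 \<Longrightarrow> derivable a2 \<Longrightarrow> derivable b"
  by (meson derivable.MP derivable.Taut)
lemma taut_mp3: "tautology (Imp a1 (Imp a2 (Imp a3 b))) \<Longrightarrow> derivable a1 \<Longrightarrow> derivable a2 \<Longrightarrow> derivable a3 \<Longrightarrow> derivable b"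
  by (meson derivable.MP derivable.Taut)

lemma remove_lemma:
  assumes "set L \<subseteq> insert \<phi> X"
  shows "\<exists>L'. set L' \<subseteq> X \<and> derivable (Imp (Conj \<phi> (conjs L')) (conjs L))"
proof (intro exI conjI)
  show "set (filter (\<lambda>y. y \<noteq> \<phi>) L) \<subseteq> X" using assms by auto
  show "derivable (Imp (Conj \<phi> (conjs (filter (\<lambda>y. y \<noteq> \<phi>) L))) (conjs L))"
    by (rule derivable.Taut) (unfold tautology_def PE, use filter_aux in blast)
qed

lemma mcs_not_in:
  assumes "maximal_consistent x" "\<phi> \<notin> x"
  shows "\<exists>L. set L \<subseteq> x \<and> derivable (Imp (conjs L) (Neg \<phi>))"
proof -
  from assms have "\<not> consistent (insert \<phi> x)" by (simp add: maximal_consistent_def)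
  then obtain L0 where L0: "set L0 \<subseteq> insert \<phi> x" "derivable (Neg (conjs L0))"
    by (auto simp: consistent_def)
  from remove_lemma[OF L0(1)] obtain L' where L': "set L' \<subseteq> x"
    "derivable (Imp (Conj \<phi> (conjs L')) (conjs L0))" by blast
  have "derivable (Imp (conjs L') (Neg \<phi>))"
    by (rule taut_mp2[OF _ L'(2) L0(2)]) (unfold tautology_def PE, blast)
  with L' show ?thesis by blast
qed

lemma mcs_closed:
  assumes "maximal_consistent x" "set L \<subseteq> x" "derivable (Imp (conjs L) \<psi>)"
  shows "\<psi> \<in> x"
proof (rule ccontr)
  assume "\<psi> \<notin> x"
  from mcs_not_in[OF assms(1) this] obtain L' where L': "set L' \<subseteq> x"
    "derivable (Imp (conjs L') (Neg \<psi>))" by blast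
  have "derivable (Neg (conjs (L @ L')))"
    by (rule taut_mp2[OF _ assms(3) L'(2)]) (unfold tautology_def PE, blast)
  moreover have "set (L @ L') \<subseteq> x" using assms(2) L'(1) by auto
  ultimately show False using assms(1) unfolding maximal_consistent_def consistent_def by blast
qed

lemma mcs_mp: assumes m: "maximal_consistent x" and d: "derivable (Imp a b)" and a: "a \<in> x" shows "b \<in> x"
proof (rule mcs_closed[OF m, of "[a]"])
  show "set [a] \<subseteq> x" using a by simp
  show "derivable (Imp (conjs [a]) b)"
    by (rule taut_mp1[OF _ d]) (unfold tautology_def PE0, blast)
qed

lemma mcs_deriv: assumes m: "maximal_consistent x" and d: "derivable \<psi>" shows "\<psi> \<in> x"
proof (rule mcs_closed[OF m, of "[]"])
  show "derivable (Imp (conjs []) \<psi>)"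
    by (rule taut_mp1[OF _ d]) (unfold tautology_def PE0, blast)
qed simp

lemma mcs_taut1: "maximal_consistent x \<Longrightarrow> a \<in> x \<Longrightarrow> tautology (Imp a b) \<Longrightarrow> b \<in> x"
  using mcs_mp derivable.Taut by blast

lemma mcs_taut2: assumes m: "maximal_consistent x" and a: "a \<in> x" and c: "c \<in> x" and t: "tautology (Imp a (Imp c b))" shows "b \<in> x"
proof (rule mcs_closed[OF m, of "[a,c]"])
  show "set [a,c] \<subseteq> x" using a c by simp
  show "derivable (Imp (conjs [a,c]) b)"
    by (rule taut_mp1[OF _ derivable.Taut[OF t]]) (unfold tautology_def PE0, blast)
qed

lemma mcs_Neg: "maximal_consistent x \<Longrightarrow> Neg \<phi> \<in> x \<longleftrightarrow> \<phi> \<notin> x"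
proof
  assume m: "maximal_consistent x" and "Neg \<phi> \<in> x"
  show "\<phi> \<notin> x"
  proof
    assume "\<phi> \<in> x"
    then have "set [\<phi>, Neg \<phi>] \<subseteq> x" using \<open>Neg \<phi> \<in> x\<close> by auto
    moreover have "derivable (Neg (conjs [\<phi>, Neg \<phi>]))" by (rule derivable.Taut) (unfold tautology_def PE0, blast)
    ultimately show False using m unfolding maximal_consistent_def consistent_def by blast
  qed
next
  assume m: "maximal_consistent x" and "\<phi> \<notin> x"
  from mcs_not_in[OF this] obtain L where L: "set L \<subseteq> x" "derivable (Imp (conjs L) (Neg \<phi>))" by blast
  show "Neg \<phi> \<in> x" by (rule mcs_closed[OF m L])
qed

lemma mcs_Conj: "maximal_consistent x \<Longrightarrow> Conj a b \<in> x \<longleftrightarrow> a \<in> x \<and> b \<in> x"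
proof
  assume m: "maximal_consistent x" and "Conj a b \<in> x"
  show "a \<in> x \<and> b \<in> x"
  proof
    show "a \<in> x" by (rule mcs_taut1[OF m \<open>Conj a b \<in> x\<close>]) (unfold tautology_def PE, blast)
    show "b \<in> x" by (rule mcs_taut1[OF m \<open>Conj a b \<in> x\<close>]) (unfold tautology_def PE, blast)
  qed
next
  assume m: "maximal_consistent x" and "a \<in> x \<and> b \<in> x"
  then have ab: "a \<in> x" "b \<in> x" by auto
  show "Conj a b \<in> x" by (rule mcs_taut2[OF m ab]) (unfold tautology_def PE, blast)
qed

definition normal :: "(('p,'a) fm \<Rightarrow> ('p,'a) fm) \<Rightarrow> bool" where
  "normal M \<longleftrightarrow> (\<forall>a b. derivable (Imp (M (Imp a b)) (Imp (M a) (M b)))) \<and> (\<forall>a. derivable a \<longrightarrow> derivable (M a))"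

lemma normal_K: "normal (K i)"
  unfolding normal_def by (auto intro: derivable.K_K derivable.NecK)

lemma normal_Int: "normal IntOp"
  unfolding normal_def by (auto intro: derivable.IntOp_K derivable.NecInt)

lemma normal_nec: "normal M \<Longrightarrow> derivable a \<Longrightarrow> derivable (M a)"
  unfolding normal_def by (elim conjE allE impE)

lemma normal_ax: "normal M \<Longrightarrow> derivable (Imp (M (Imp a b)) (Imp (M a) (M b)))"
  unfolding normal_def by (elim conjE allE)

lemma normal_mono: assumes "normal M" "derivable (Imp a b)" shows "derivable (Imp (M a) (M b))"
proof -
  have "derivable (M (Imp a b))" by (rule normal_nec[OF assms])
  moreover have "derivable (Imp (M (Imp a b)) (Imp (M a) (M b)))" by (rule normal_ax[OF assms(1)])
  ultimately show ?thesis by (rule derivable.MP[rotated])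
qed

lemma normal_conj: assumes "normal M" shows "derivable (Imp (M a) (Imp (M b) (M (Conj a b))))"
proof -
  have t: "derivable (Imp a (Imp b (Conj a b)))" by (rule derivable.Taut) (unfold tautology_def PE0, blast)
  have X: "derivable (Imp (M a) (M (Imp b (Conj a b))))" by (rule normal_mono[OF assms t])
  have Y: "derivable (Imp (M (Imp b (Conj a b))) (Imp (M b) (M (Conj a b))))" by (rule normal_ax[OF assms])
  show ?thesis by (rule taut_mp2[OF _ X Y]) (unfold tautology_def PE0, blast)
qed

lemma normal_conjs: assumes "normal M" "\<forall>g\<in>set L. derivable (Imp g (M g))"
  shows "derivable (Imp (conjs L) (M (conjs L)))"
  using assms(2)
proof (induct L)
  case Nil
  have "derivable (Top :: ('a,'b) fm)" by (rule derivable.Taut) (simp add: tautology_def)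
  then have "derivable (M Top)" by (rule normal_nec[OF assms(1)])
  then show ?case by (rule taut_mp1[rotated]) (unfold tautology_def PE0, blast)
next
  case (Cons g L)
  have A: "derivable (Imp g (M g))" using Cons.prems by simp
  have B: "derivable (Imp (conjs L) (M (conjs L)))" using Cons by simp
  have C: "derivable (Imp (M g) (Imp (M (conjs L)) (M (Conj g (conjs L)))))" by (rule normal_conj[OF assms(1)])
  show ?case by (rule taut_mp3[OF _ A B C]) (unfold tautology_def PE0, blast)
qed

lemma chain_finite:
  assumes "finite F" "F \<subseteq> \<Union>C" "C \<noteq> {}" "\<forall>X\<in>C. \<forall>Y\<in>C. X \<subseteq> Y \<or> Y \<subseteq> X"
  shows "\<exists>D\<in>C. F \<subseteq> D"
  using assms(1,2)
proof (induct F rule: finite_induct)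
  case empty then show ?case using assms(3) by blast
next
  case (insert a F)
  then obtain D where D: "D \<in> C" "F \<subseteq> D" by auto
  from insert.prems obtain E where E: "E \<in> C" "a \<in> E" by blast
  have "D \<subseteq> E \<or> E \<subseteq> D" using assms(4) D(1) E(1) by blast
  then show ?case
  proof
    assume "D \<subseteq> E" then show ?case using D E by blast
  next
    assume "E \<subseteq> D" then show ?case using D E by blast
  qed
qed

lemma lindenbaum:
  assumes "consistent \<Gamma>"
  shows "\<exists>y. maximal_consistent y \<and> \<Gamma> \<subseteq> y"
proof -
  let ?A = "{\<Delta>. \<Gamma> \<subseteq> \<Delta> \<and> consistent \<Delta>}"
  have "\<exists>M\<in>?A. \<forall>X\<in>?A. M \<subseteq> X \<longrightarrow> X = M"
  proof (rule subset_Zorn_nonempty)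
    show "?A \<noteq> {}" using assms by blast
  next
    fix C assume C: "C \<noteq> {}" "subset.chain ?A C"
    then have CA: "C \<subseteq> ?A" and ch: "\<forall>X\<in>C. \<forall>Y\<in>C. X \<subseteq> Y \<or> Y \<subseteq> X" by (auto simp: subset_chain_def)
    have "\<Gamma> \<subseteq> \<Union>C" using C(1) CA by blast
    moreover have "consistent (\<Union>C)"
      unfolding consistent_def
    proof
      assume "\<exists>L. set L \<subseteq> \<Union>C \<and> derivable (Neg (conjs L))"
      then obtain L where L: "set L \<subseteq> \<Union>C" "derivable (Neg (conjs L))" by blast
      obtain D where "D \<in> C" "set L \<subseteq> D" using chain_finite[OF _ L(1) C(1) ch] by blast
      then have "consistent D" using CA by blast
      then show False using \<open>set L \<subseteq> D\<close> L(2) unfolding consistent_def by blast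
    qed
    ultimately show "\<Union>C \<in> ?A" by blast
  qed
  then obtain M where M: "M \<in> ?A" "\<forall>X\<in>?A. M \<subseteq> X \<longrightarrow> X = M" by blast
  have "maximal_consistent M"
    unfolding maximal_consistent_def
  proof (intro conjI allI impI)
    show "consistent M" using M(1) by simp
    fix \<phi> assume "\<phi> \<notin> M"
    show "\<not> consistent (insert \<phi> M)"
    proof
      assume "consistent (insert \<phi> M)"
      moreover have "\<Gamma> \<subseteq> insert \<phi> M" using M(1) by auto
      ultimately have "insert \<phi> M \<in> ?A" by simp
      then have "insert \<phi> M = M" using M(2) by auto
      then show False using \<open>\<phi> \<notin> M\<close> by blast
    qed
  qed
  moreover have "\<Gamma> \<subseteq> M" using M(1) by simp
  ultimately show ?thesis by blast
qed

lemma ext_lemma: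
  assumes m: "maximal_consistent x" and n: "normal M" and G: "G \<subseteq> x"
    and gM: "\<forall>g\<in>G. derivable (Imp g (M g))" and nM: "M \<phi> \<notin> x"
  shows "\<exists>y. maximal_consistent y \<and> G \<subseteq> y \<and> \<phi> \<notin> y"
proof -
  have "consistent (insert (Neg \<phi>) G)"
    unfolding consistent_def
  proof
    assume "\<exists>L. set L \<subseteq> insert (Neg \<phi>) G \<and> derivable (Neg (conjs L))"
    then obtain L0 where L0: "set L0 \<subseteq> insert (Neg \<phi>) G" "derivable (Neg (conjs L0))" by blast
    from remove_lemma[OF L0(1)] obtain L' where L': "set L' \<subseteq> G"
      "derivable (Imp (Conj (Neg \<phi>) (conjs L')) (conjs L0))" by blast
    have d1: "derivable (Imp (conjs L') \<phi>)"
      by (rule taut_mp2[OF _ L'(2) L0(2)]) (unfold tautology_def PE, blast)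
    have d2: "derivable (Imp (conjs L') (M (conjs L')))"
    proof (rule normal_conjs[OF n])
      show "\<forall>g\<in>set L'. derivable (Imp g (M g))" using gM L'(1) by blast
    qed
    have d3: "derivable (Imp (M (conjs L')) (M \<phi>))" by (rule normal_mono[OF n d1])
    have "derivable (Imp (conjs L') (M \<phi>))"
      by (rule taut_mp2[OF _ d2 d3]) (unfold tautology_def PE0, blast)
    moreover have "set L' \<subseteq> x" using L'(1) G by blast
    ultimately have "M \<phi> \<in> x" using mcs_closed[OF m] by blast
    then show False using nM by blast
  qed
  then obtain y where y: "maximal_consistent y" "insert (Neg \<phi>) G \<subseteq> y" using lindenbaum by blast
  then have "\<phi> \<notin> y" using mcs_Neg[OF y(1)] by blast
  then show ?thesis using y by blast
qed

definition Gk :: "('p,'a) fm set \<Rightarrow> 'a \<Rightarrow> ('p,'a) fm set" where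
  "Gk x i = {g\<in>x. \<exists>c. g = K i c \<or> g = Neg (K i c)}"

lemma Xc_iff: "x \<in> Xc \<longleftrightarrow> maximal_consistent x"
  by (simp add: Xc_def)

lemma agree:
  assumes mx: "maximal_consistent x" and my: "maximal_consistent y" and G: "Gk x i \<subseteq> y"
  shows "y \<in> eqclass x i"
  unfolding eqclass_def
proof (intro CollectI conjI allI)
  show "y \<in> Xc" using my by (simp add: Xc_iff)
  fix c
  show "K i c \<in> x \<longleftrightarrow> K i c \<in> y"
  proof (cases "K i c \<in> x")
    case True
    then have "K i c \<in> Gk x i" unfolding Gk_def by blast
    then show ?thesis using G True by blast
  next
    case False
    then have "Neg (K i c) \<in> x" using mcs_Neg[OF mx] by blast
    then have "Neg (K i c) \<in> Gk x i" unfolding Gk_def by blast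
    then have "Neg (K i c) \<in> y" using G by blast
    then have "K i c \<notin> y" using mcs_Neg[OF my] by blast
    then show ?thesis using False by blast
  qed
qed

lemma Gk_K: assumes "g \<in> Gk x i" shows "derivable (Imp g (K i g))"
proof -
  from assms obtain c where "g = K i c \<or> g = Neg (K i c)" unfolding Gk_def by blast
  then show ?thesis
  proof
    assume "g = K i c" then show ?thesis using derivable.K_4[of i c] by simp
  next
    assume "g = Neg (K i c)" then show ?thesis using derivable.K_5[of i c] by simp
  qed
qed

lemma Gk_Int: assumes "g \<in> Gk x i" shows "derivable (Imp g (IntOp g))"
proof -
  have a: "derivable (Imp g (K i g))" by (rule Gk_K[OF assms])
  have b: "derivable (Imp (K i g) (IntOp g))" by (rule derivable.K_Int)
  show ?thesis by (rule taut_mp2[OF _ a b]) (unfold tautology_def PE0, blast)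
qed

lemma K_case:
  assumes mx: "maximal_consistent x"
  shows "K i \<phi> \<in> x \<longleftrightarrow> (\<forall>y\<in>eqclass x i. \<phi> \<in> y)"
proof
  assume "K i \<phi> \<in> x"
  show "\<forall>y\<in>eqclass x i. \<phi> \<in> y"
  proof
    fix y assume y: "y \<in> eqclass x i"
    then have my: "maximal_consistent y" unfolding eqclass_def Xc_iff by blast
    have "K i \<phi> \<in> y" using y \<open>K i \<phi> \<in> x\<close> unfolding eqclass_def by blast
    then show "\<phi> \<in> y" using mcs_mp[OF my derivable.K_T] by blast
  qed
next
  assume all: "\<forall>y\<in>eqclass x i. \<phi> \<in> y"
  show "K i \<phi> \<in> x"
  proof (rule ccontr)
    assume nK: "K i \<phi> \<notin> x"
    have "\<exists>y. maximal_consistent y \<and> Gk x i \<subseteq> y \<and> \<phi> \<notin> y"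
    proof (rule ext_lemma[OF mx normal_K _ _ nK])
      show "Gk x i \<subseteq> x" unfolding Gk_def by blast
      show "\<forall>g\<in>Gk x i. derivable (Imp g (K i g))" by (intro ballI Gk_K)
    qed
    then obtain y where y: "maximal_consistent y" "Gk x i \<subseteq> y" "\<phi> \<notin> y" by blast
    have "y \<in> eqclass x i" by (rule agree[OF mx y(1) y(2)])
    then show False using all y(3) by blast
  qed
qed

definition Nb :: "('p,'a) fm set \<Rightarrow> ('a \<times> ('p,'a) fm) set \<Rightarrow> ('p,'a) fm set set" where
  "Nb z F = {y\<in>Xc. \<forall>(i,\<psi>)\<in>F. y \<in> eqclass z i \<and> IntOp \<psi> \<in> y}"

lemma eqclass_self: "z \<in> Xc \<Longrightarrow> z \<in> eqclass z i"
  unfolding eqclass_def by blast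

lemma eqclass_trans: "z \<in> eqclass w i \<Longrightarrow> y \<in> eqclass z i \<Longrightarrow> y \<in> eqclass w i"
  unfolding eqclass_def by blast

lemma nbhd:
  assumes "generate_topology_on {eqclass x i \<inter> hat (IntOp \<phi>) | x i \<phi>. x \<in> Xc} U"
  shows "\<forall>z\<in>U. \<exists>F. z \<in> Nb z F \<and> Nb z F \<subseteq> U"
  using assms
proof (induct rule: generate_topology_on.induct)
  case Empty then show ?case by blast
next
  case (Int a b)
  show ?case
  proof
    fix z assume "z \<in> a \<inter> b"
    then obtain F1 F2 where F1: "z \<in> Nb z F1" "Nb z F1 \<subseteq> a" and F2: "z \<in> Nb z F2" "Nb z F2 \<subseteq> b"
      using Int.hyps(2,4) by blast
    have "z \<in> Nb z (F1 \<union> F2)" using F1(1) F2(1) unfolding Nb_def by blast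
    moreover have "Nb z (F1 \<union> F2) \<subseteq> a \<inter> b" using F1(2) F2(2) unfolding Nb_def by blast
    ultimately show "\<exists>F. z \<in> Nb z F \<and> Nb z F \<subseteq> a \<inter> b" by blast
  qed
next
  case (UN K)
  show ?case
  proof
    fix z assume "z \<in> \<Union>K"
    then obtain k where k: "k \<in> K" "z \<in> k" by blast
    then obtain F where "z \<in> Nb z F" "Nb z F \<subseteq> k" using UN.hyps by blast
    then show "\<exists>F. z \<in> Nb z F \<and> Nb z F \<subseteq> \<Union>K" using k by blast
  qed
next
  case (Basis s)
  then obtain w i \<psi> where s: "s = eqclass w i \<inter> hat (IntOp \<psi>)" by blast
  show ?case
  proof
    fix z assume z: "z \<in> s"
    then have zX: "z \<in> Xc" and zw: "z \<in> eqclass w i" and zI: "IntOp \<psi> \<in> z"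
      unfolding s hat_def eqclass_def by auto
    have "z \<in> Nb z {(i,\<psi>)}" unfolding Nb_def using zX zI eqclass_self[OF zX] by blast
    moreover have "Nb z {(i,\<psi>)} \<subseteq> s"
    proof
      fix y assume "y \<in> Nb z {(i,\<psi>)}"
      then have "y \<in> Xc" "y \<in> eqclass z i" "IntOp \<psi> \<in> y" unfolding Nb_def by auto
      then show "y \<in> s" unfolding s hat_def using eqclass_trans[OF zw] by blast
    qed
    ultimately show "\<exists>F. z \<in> Nb z F \<and> Nb z F \<subseteq> s" by blast
  qed
qed

lemma Int_case:
  assumes mx: "maximal_consistent x"
  shows "IntOp \<phi> \<in> x \<longleftrightarrow> x \<in> tau_c interior_of (hat \<phi>)"
proof
  assume I: "IntOp \<phi> \<in> x"
  have xX: "x \<in> Xc" using mx by (simp add: Xc_iff)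
  let ?T = "eqclass x undefined \<inter> hat (IntOp \<phi>)"
  have "openin tau_c ?T" unfolding tau_c_def
    by (rule topology_generated_by_Basis) (use xX in blast)
  moreover have "x \<in> ?T" using xX I eqclass_self[OF xX] unfolding hat_def by blast
  moreover have "?T \<subseteq> hat \<phi>"
  proof
    fix y assume "y \<in> ?T"
    then have y: "y \<in> Xc" "IntOp \<phi> \<in> y" unfolding hat_def by auto
    then have "\<phi> \<in> y" using mcs_mp[OF _ derivable.Int_T] by (simp add: Xc_iff)
    then show "y \<in> hat \<phi>" using y unfolding hat_def by blast
  qed
  ultimately show "x \<in> tau_c interior_of (hat \<phi>)" unfolding interior_of_def by blast
next
  assume "x \<in> tau_c interior_of (hat \<phi>)"
  then obtain T where T: "openin tau_c T" "x \<in> T" "T \<subseteq> hat \<phi>" unfolding interior_of_def by blast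
  from T(1) have "generate_topology_on {eqclass x i \<inter> hat (IntOp \<phi>) | x i \<phi>. x \<in> Xc} T"
    unfolding tau_c_def by (rule openin_topology_generated_by)
  from nbhd[OF this] T(2) obtain F where F: "x \<in> Nb x F" "Nb x F \<subseteq> T" by blast
  show "IntOp \<phi> \<in> x"
  proof (rule ccontr)
    assume nI: "IntOp \<phi> \<notin> x"
    define G where "G = {g\<in>x. \<exists>(i,\<psi>)\<in>F. g \<in> Gk x i \<or> g = IntOp \<psi>}"
    have "\<exists>y. maximal_consistent y \<and> G \<subseteq> y \<and> \<phi> \<notin> y"
    proof (rule ext_lemma[OF mx normal_Int _ _ nI])
      show "G \<subseteq> x" unfolding G_def by blast
      show "\<forall>g\<in>G. derivable (Imp g (IntOp g))"
      proof
        fix g assume "g \<in> G"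
        then obtain i \<psi> where "g \<in> Gk x i \<or> g = IntOp \<psi>" unfolding G_def by blast
        then show "derivable (Imp g (IntOp g))"
        proof
          assume "g \<in> Gk x i" then show ?thesis by (rule Gk_Int)
        next
          assume "g = IntOp \<psi>" then show ?thesis using derivable.Int_4[of \<psi>] by simp
        qed
      qed
    qed
    then obtain y where y: "maximal_consistent y" "G \<subseteq> y" "\<phi> \<notin> y" by blast
    have "y \<in> Nb x F" unfolding Nb_def
    proof (intro CollectI conjI ballI)
      show "y \<in> Xc" using y(1) by (simp add: Xc_iff)
      fix p assume p: "p \<in> F"
      obtain i \<psi> where pe: "p = (i, \<psi>)" by fastforce
      have "Gk x i \<subseteq> G" unfolding G_def Gk_def using p pe by blast
      then have "y \<in> eqclass x i" using agree[OF mx y(1)] y(2) by blast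
      moreover have "IntOp \<psi> \<in> x" using F(1) p pe unfolding Nb_def by blast
      then have "IntOp \<psi> \<in> G" unfolding G_def using p pe by blast
      then have "IntOp \<psi> \<in> y" using y(2) by blast
      ultimately show "case p of (i, \<psi>) \<Rightarrow> y \<in> eqclass x i \<and> IntOp \<psi> \<in> y" using pe by simp
    qed
    then have "y \<in> hat \<phi>" using F(2) T(3) by blast
    then show False using y(3) unfolding hat_def by blast
  qed
qed

theorem mainTheorem15:
  fixes \<phi> :: "('p::countable, 'a::finite) fm"
    and x :: "('p, 'a) fm set"
  assumes "x \<in> Xc"
  shows "\<phi> \<in> x \<longleftrightarrow> sat tau_c Vc Xc theta_star \<phi> x"
  using assms
proof (induct \<phi> arbitrary: x)
  case (Atom p) then show ?case by (simp add: Vc_def)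
next
  case (Neg \<phi>)
  then show ?case using mcs_Neg[of x \<phi>] by (simp add: Xc_iff)
next
  case (Conj \<phi>1 \<phi>2)
  then show ?case using mcs_Conj[of x \<phi>1 \<phi>2] by (simp add: Xc_iff)
next
  case (K i \<phi>)
  have sub: "eqclass x i \<subseteq> Xc" unfolding eqclass_def by blast
  have "(\<forall>y\<in>eqclass x i. \<phi> \<in> y) \<longleftrightarrow> (\<forall>y\<in>eqclass x i. sat tau_c Vc Xc theta_star \<phi> y)"
    using K.hyps sub by blast
  moreover have "theta_star x i = eqclass x i" by (simp add: theta_star_def)
  ultimately show ?case using K_case[of x i \<phi>] K.prems by (simp add: Xc_iff)
next
  case (IntOp \<phi>)
  have "{y \<in> Xc. sat tau_c Vc Xc theta_star \<phi> y} = hat \<phi>"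
    using IntOp.hyps unfolding hat_def by blast
  then show ?case using Int_case[of x \<phi>] IntOp.prems by (simp add: Xc_iff)
qed

end
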